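(* Let $n\geq 3$ be odd. (i) $\mu^-(G)\leq\mu^-(A_n)$ for all threshold graphs $G$ on $n$ vertices. (ii) $\mu^+(A_n)\leq\mu^+(G)$ for all threshold graphs $G$ on $n$ vertices with binary string $b=0^{s_1}1^{t_1}\cdots0^{s_k}1^{t_k}$ with $s_1\geq 2$. (iii) $\mu^+(A_n)\leq\mu^+(G)$ for all threshold graphs $G$ on $n$ vertices with binary string $b=0^{s_1}1^{t_1}\cdots0^{s_k}1^{t_k}$ with $s_1=1$ and $2k+1<n$.
   Context: Eigenvalues of a graph are those of its $(0,1)$-adjacency matrix. For a graph $H$, $\mu^-(H)$ is the largest eigenvalue of $H$ less than $-1$ and $\mu^+(H)$ is the smallest positive eigenvalue of $H$. Threshold graphs from binary strings: given $b=b_1\cdots b_n\in\{0,1\}^n$ with $b_1=0$, start with a single vertex and for $j=2,\ldots,n$ add a new vertex adjacent to all previous vertices if $b_j=1$ and isolated if $b_j=0$; the result is $G(b)$, and $b$ is its binary string. $0^s$ (resp. $1^t$) denotes $s\geq1$ consecutive zeros (resp. $t\geq1$ ones). The anti-regular graph $A_m$ is $G(b)$ with $b=0101\cdots01$ (length $m$) for $m$ even and $b=00101\cdots01$ (length $m$) for $m$ odd. *)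

theory Defs
  imports "Jordan_Normal_Form.Char_Poly"
begin

text \<open>Threshold graph G(b) from a binary string b (a bool list, True = 1, False = 0),
  vertices 0..length b - 1; vertex j (j>0) is adjacent to all earlier vertices iff b!j.\<close>

definition threshold_adj :: "bool list \<Rightarrow> nat \<Rightarrow> nat \<Rightarrow> bool" where
  "threshold_adj b i j \<longleftrightarrow> i \<noteq> j \<and> b ! (max i j)"

definition adj_matrix :: "bool list \<Rightarrow> real mat" where
  "adj_matrix b = mat (length b) (length b) (\<lambda>(i, j). if threshold_adj b i j then 1 else 0)"

definition threshold_string :: "nat \<Rightarrow> bool list \<Rightarrow> bool" where
  "threshold_string n b \<longleftrightarrow> length b = n \<and> n \<ge> 1 \<and> b ! 0 = False"

definition block_form :: "bool list \<Rightarrow> nat list \<Rightarrow> nat list \<Rightarrow> bool" where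
  "block_form b s t \<longleftrightarrow> length s = length t \<and> length s \<ge> 1 \<and>
     (\<forall>i < length s. s ! i \<ge> 1 \<and> t ! i \<ge> 1) \<and>
     b = concat (map (\<lambda>i. replicate (s ! i) False @ replicate (t ! i) True) [0..<length s])"

definition anti_regular_string :: "nat \<Rightarrow> bool list" where
  "anti_regular_string m =
     (if even m then concat (replicate (m div 2) [False, True])
      else False # concat (replicate (m div 2) [False, True]))"

definition mu_minus :: "real mat \<Rightarrow> real" where
  "mu_minus A = Max {x. eigenvalue A x \<and> x < -1}"

definition mu_plus :: "real mat \<Rightarrow> real" where
  "mu_plus A = Min {x. eigenvalue A x \<and> x > 0}"

end

theory Submission
  imports Defs
begin

definition al :: "real \<Rightarrow> real" where "al l = 1 / l"
definition ga :: "real \<Rightarrow> real" where "ga l = - 1 / (l + 1)"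

fun rstep :: "real \<Rightarrow> bool \<times> nat \<Rightarrow> real \<times> real \<Rightarrow> real \<times> real" where
  "rstep l (c, m) (T, s) = (if c then (T + real m * ga l * s, s) else (T, s + real m * al l * T))"

definition traj :: "real \<Rightarrow> bool list \<Rightarrow> real \<times> real" where
  "traj l b = foldl (\<lambda>v c. rstep l (c, 1) v) (1, 1) b"

lemma traj_take_Suc:
  assumes "m < length b"
  shows "traj l (take (Suc m) b) = rstep l (b ! m, 1) (traj l (take m b))"
  using assms by (simp add: traj_def take_Suc_conv_app_nth)

lemma adj_carrier: "adj_matrix b \<in> carrier_mat (length b) (length b)"
  by (simp add: adj_matrix_def)

lemma adj_mulv:
  assumes v: "v \<in> carrier_vec (length b)" and j: "j < length b"
  shows "(adj_matrix b *\<^sub>v v) $ j =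
    (if b ! j then (\<Sum>i<j. v $ i) else 0) + (\<Sum>i\<in>{Suc j..<length b}. if b ! i then v $ i else 0)"
proof -
  let ?n = "length b"
  let ?f = "\<lambda>i. (if threshold_adj b j i then 1 else 0) * v $ i"
  have "(adj_matrix b *\<^sub>v v) $ j = (\<Sum>i<?n. ?f i)"
    using v j by (simp add: adj_matrix_def mult_mat_vec_def scalar_prod_def lessThan_atLeast0)
  also have "{..<?n} = {..<j} \<union> {j} \<union> {Suc j..<?n}" using j by auto
  also have "(\<Sum>i\<in>{..<j} \<union> {j} \<union> {Suc j..<?n}. ?f i) =
     (\<Sum>i<j. ?f i) + ?f j + (\<Sum>i\<in>{Suc j..<?n}. ?f i)"
    by (subst sum.union_disjoint, auto)+
  also have "(\<Sum>i<j. ?f i) = (if b ! j then (\<Sum>i<j. v $ i) else 0)"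
    by (auto simp: threshold_adj_def max_def intro!: sum.cong)
  also have "?f j = 0" by (simp add: threshold_adj_def)
  also have "(\<Sum>i\<in>{Suc j..<?n}. ?f i) = (\<Sum>i\<in>{Suc j..<length b}. if b ! i then v $ i else 0)"
    by (auto simp: threshold_adj_def max_def intro!: sum.cong)
  finally show ?thesis by simp
qed

lemma eig_imp_traj:
  assumes l0: "l \<noteq> 0" and l1: "l \<noteq> -1" and b0: "b ! 0 = False" and ne: "b \<noteq> []"
    and ev: "eigenvalue (adj_matrix b) l"
  shows "fst (traj l b) = 0"
proof -
  let ?n = "length b"
  have lp: "l + 1 \<noteq> 0" using l1 by (metis add.commute add_eq_0_iff)
  from ev obtain v where v: "v \<in> carrier_vec ?n" and vne: "v \<noteq> 0\<^sub>v ?n"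
    and Av: "adj_matrix b *\<^sub>v v = l \<cdot>\<^sub>v v"
    unfolding eigenvalue_def eigenvector_def by (auto simp: adj_matrix_def)
  define S where "S m = (\<Sum>i<m. v $ i)" for m
  define R where "R m = (\<Sum>i\<in>{m..<?n}. if b ! i then v $ i else 0)" for m
  have eq: "l * v $ j = (if b ! j then S j else 0) + R (Suc j)" if "j < ?n" for j
  proof -
    have "(adj_matrix b *\<^sub>v v) $ j = l * v $ j" using Av that v by simp
    then show ?thesis using adj_mulv[OF v that] by (cases "b ! j") (auto simp: S_def R_def)
  qed
  have RSuc: "R m = (if b ! m then v $ m else 0) + R (Suc m)" if "m < ?n" for m
    unfolding R_def using that by (subst sum.atLeast_Suc_lessThan) auto
  have SSuc: "S (Suc m) = S m + v $ m" for m unfolding S_def by simp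
  define c where "c = l * v $ 0"
  have inv: "R m = c * fst (traj l (take m b)) \<and> S m + R m = c * snd (traj l (take m b))"
    if "m \<le> ?n" for m
    using that
  proof (induction m)
    case 0
    have "R 0 = R 1" using RSuc[of 0] b0 ne by simp
    also have "R 1 = c" using eq[of 0] b0 ne by (simp add: c_def)
    finally show ?case by (simp add: traj_def S_def)
  next
    case (Suc m)
    then have m: "m < ?n" by simp
    from Suc.IH m have IH1: "R m = c * fst (traj l (take m b))"
      and IH2: "S m + R m = c * snd (traj l (take m b))" by auto
    obtain T s where ts: "traj l (take m b) = (T, s)" by force
    show ?case
    proof (cases "b ! m")
      case True
      have e: "(l + 1) * v $ m = S m + R m" using eq[OF m] RSuc[OF m] True
        by (simp add: algebra_simps)
      have vm: "v $ m = (S m + R m) / (l + 1)"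
        using nonzero_mult_div_cancel_left[OF lp, of "v $ m"] e by simp
      have X: "traj l (take (Suc m) b) = (T - s / (l + 1), s)" using ts True
        by (simp add: traj_take_Suc[OF m] ga_def)
      have I1: "R m = c * T" and I2: "S m + R m = c * s" using IH1 IH2 ts by auto
      have "c * (T - s / (l + 1)) = R m - v $ m"
        using I1 I2 vm by (simp add: right_diff_distrib)
      then show ?thesis using X RSuc[OF m] SSuc[of m] True I2 by simp
    next
      case False
      have vm: "v $ m = R m / l" using eq[OF m] RSuc[OF m] False l0
        by (simp add: nonzero_eq_divide_eq mult.commute)
      have X: "traj l (take (Suc m) b) = (T, s + T / l)" using ts False
        by (simp add: traj_take_Suc[OF m] al_def)
      have I1: "R m = c * T" and I2: "S m + R m = c * s" using IH1 IH2 ts by auto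
      have "c * (s + T / l) = S m + R m + v $ m"
        using I1 I2 vm by (simp add: distrib_left)
      then show ?thesis using X RSuc[OF m] SSuc[of m] False I1 by simp
    qed
  qed
  have Rn: "R ?n = 0" by (simp add: R_def)
  have cne: "c \<noteq> 0"
  proof
    assume c0: "c = 0"
    have "S m = 0" if "m \<le> ?n" for m using inv[OF that] c0 by simp
    then have "v $ m = 0" if "m < ?n" for m using SSuc[of m] that
      by (metis Suc_leI add_left_cancel less_imp_le_nat add.right_neutral)
    then have "v = 0\<^sub>v ?n" using v by (intro eq_vecI) auto
    with vne show False by simp
  qed
  from inv[of ?n] Rn cne show ?thesis by simp
qed

lemma traj_imp_eig:
  assumes l0: "l \<noteq> 0" and l1: "l \<noteq> -1" and b0: "b ! 0 = False" and ne: "b \<noteq> []"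
    and tr: "fst (traj l b) = 0"
  shows "eigenvalue (adj_matrix b) l"
proof -
  let ?n = "length b"
  have lp: "l + 1 \<noteq> 0" using l1 by (metis add.commute add_eq_0_iff)
  define X where "X m = traj l (take m b)" for m
  define v where "v = vec ?n (\<lambda>m. if b ! m then snd (X m) / (l + 1) else fst (X m) / l)"
  define S where "S m = (\<Sum>i<m. v $ i)" for m
  define R where "R m = (\<Sum>i\<in>{m..<?n}. if b ! i then v $ i else 0)" for m
  define Q where "Q m = (\<Sum>i<m. if b ! i then v $ i else 0)" for m
  have vc: "v \<in> carrier_vec ?n" by (simp add: v_def)
  have f1: "fst (X m) = 1 - Q m \<and> snd (X m) - fst (X m) = S m" if "m \<le> ?n" for m
    using that
  proof (induction m)
    case 0 then show ?case by (simp add: X_def traj_def Q_def S_def)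
  next
    case (Suc m)
    then have m: "m < ?n" by simp
    obtain T s where ts: "X m = (T, s)" by force
    have XS: "X (Suc m) = rstep l (b ! m, 1) (X m)" unfolding X_def by (rule traj_take_Suc[OF m])
    have vm: "v $ m = (if b ! m then snd (X m) / (l + 1) else fst (X m) / l)"
      using m by (simp add: v_def)
    have QS: "Q (Suc m) = Q m + (if b ! m then v $ m else 0)" "S (Suc m) = S m + v $ m"
      by (auto simp: Q_def S_def)
    from Suc.IH m have I1: "T = 1 - Q m" and I2: "s - T = S m" using ts by auto
    show ?case
    proof (cases "b ! m")
      case True
      have "X (Suc m) = (T - v $ m, s)" using XS ts vm True
        by (simp add: ga_def)
      then show ?thesis using QS True I1 I2 by auto
    next
      case False
      have "X (Suc m) = (T, s + v $ m)" using XS ts vm False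
        by (simp add: al_def)
      then show ?thesis using QS False I1 I2 by auto
    qed
  qed
  have Qn: "Q ?n = 1" using f1[of ?n] tr by (simp add: X_def)
  have QR: "Q m + R m = Q ?n" if "m \<le> ?n" for m
  proof -
    have "{..<?n} = {..<m} \<union> {m..<?n}" using that by auto
    then show ?thesis unfolding Q_def R_def
      by (simp add: sum.union_disjoint[symmetric] ivl_disj_int)
  qed
  have RX: "R m = fst (X m)" if "m \<le> ?n" for m using QR[OF that] Qn f1[OF that] by simp
  have RSuc: "R m = (if b ! m then v $ m else 0) + R (Suc m)" if "m < ?n" for m
    unfolding R_def using that by (subst sum.atLeast_Suc_lessThan) auto
  have Av: "adj_matrix b *\<^sub>v v = l \<cdot>\<^sub>v v"
  proof (rule eq_vecI)
    show "dim_vec (adj_matrix b *\<^sub>v v) = dim_vec (l \<cdot>\<^sub>v v)" by (simp add: adj_matrix_def v_def)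
  next
    fix j assume "j < dim_vec (l \<cdot>\<^sub>v v)"
    then have j: "j < ?n" by (simp add: v_def)
    have vj: "v $ j = (if b ! j then snd (X j) / (l + 1) else fst (X j) / l)"
      using j by (simp add: v_def)
    have lhs: "(adj_matrix b *\<^sub>v v) $ j = (if b ! j then S j else 0) + R (Suc j)"
      using adj_mulv[OF vc j] by (simp add: S_def R_def)
    have A: "R j = fst (X j)" "S j = snd (X j) - fst (X j)" using RX[of j] f1[of j] j by auto
    have rhs: "(l \<cdot>\<^sub>v v) $ j = l * v $ j" using j by (simp add: v_def)
    show "(adj_matrix b *\<^sub>v v) $ j = (l \<cdot>\<^sub>v v) $ j"
    proof (cases "b ! j")
      case True
      have "l * v $ j = snd (X j) - v $ j" using vj True lp
        by (simp add: field_simps)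
      then show ?thesis using lhs rhs RSuc[OF j] A True by simp
    next
      case False
      have "l * v $ j = fst (X j)" using vj False l0 by simp
      then show ?thesis using lhs rhs RSuc[OF j] A False by simp
    qed
  qed
  have "v $ 0 = 1 / l" using b0 ne by (simp add: v_def X_def traj_def)
  then have vne: "v \<noteq> 0\<^sub>v ?n" using l0 ne by (auto dest: arg_cong[of _ _ "\<lambda>w. w $ 0"])
  have dr: "dim_row (adj_matrix b) = ?n" by (simp add: adj_matrix_def)
  have "eigenvector (adj_matrix b) v l"
    unfolding eigenvector_def dr using vc vne Av by blast
  then show ?thesis unfolding eigenvalue_def by blast
qed

lemma eig_iff_traj:
  assumes "l \<noteq> 0" "l \<noteq> -1" "b ! 0 = False" "b \<noteq> []"
  shows "eigenvalue (adj_matrix b) l \<longleftrightarrow> fst (traj l b) = 0"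
  using eig_imp_traj[OF assms] traj_imp_eig[OF assms] by (rule iffI)

lemma finite_eig: "finite {x. eigenvalue (adj_matrix b) x \<and> P x}"
proof -
  have A: "adj_matrix b \<in> carrier_mat (length b) (length b)" by (rule adj_carrier)
  have "char_poly (adj_matrix b) \<noteq> 0" using degree_monic_char_poly[OF A] by auto
  then have "finite {x. poly (char_poly (adj_matrix b)) x = 0}" by (rule poly_roots_finite)
  moreover have "{x. eigenvalue (adj_matrix b) x \<and> P x} \<subseteq> {x. poly (char_poly (adj_matrix b)) x = 0}"
    using eigenvalue_root_char_poly[OF A] by blast
  ultimately show ?thesis by (rule finite_subset[rotated])
qed

definition rstate :: "real \<Rightarrow> (bool \<times> nat) list \<Rightarrow> nat \<Rightarrow> real \<times> real" where
  "rstate l rs i = foldl (\<lambda>v r. rstep l r v) (1, 1) (take i rs)"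

definition prodr :: "real \<Rightarrow> (bool \<times> nat) list \<Rightarrow> nat \<Rightarrow> real" where
  "prodr l rs i = fst (rstate l rs i) * snd (rstate l rs i)"

definition shape :: "(bool \<times> nat) list \<Rightarrow> bool" where
  "shape rs \<longleftrightarrow> even (length rs) \<and> 0 < length rs \<and>
     (\<forall>i < length rs. fst (rs ! i) = odd i \<and> 1 \<le> snd (rs ! i))"

definition sg :: "real \<Rightarrow> bool \<Rightarrow> real" where
  "sg e c = (if c then - e else e)"

definition Cross :: "real \<Rightarrow> real \<Rightarrow> (bool \<times> nat) list \<Rightarrow> bool" where
  "Cross e l rs \<longleftrightarrow> (\<forall>i < length rs. sg e (fst (rs ! i)) * prodr l rs (Suc i) > 0)"

lemma rstate_0[simp]: "rstate l rs 0 = (1, 1)" by (simp add: rstate_def)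

lemma rstate_Suc:
  "i < length rs \<Longrightarrow> rstate l rs (Suc i) = rstep l (rs ! i) (rstate l rs i)"
  by (simp add: rstate_def take_Suc_conv_app_nth)

lemma rstep_True: "rstep l (True, m) v = (fst v + real m * ga l * snd v, snd v)"
  by (cases v) simp
lemma rstep_False: "rstep l (False, m) v = (fst v, snd v + real m * al l * fst v)"
  by (cases v) simp

lemma fold_replicate:
  "foldl (\<lambda>v c. rstep l (c, 1) v) v (replicate m c) = rstep l (c, m) v"
proof (induction m arbitrary: v)
  case 0 then show ?case by (cases c; cases v) simp_all
next
  case (Suc m)
  have "foldl (\<lambda>v c. rstep l (c, 1) v) v (replicate (Suc m) c)
      = foldl (\<lambda>v c. rstep l (c, 1) v) (rstep l (c, 1) v) (replicate m c)" by simp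
  also have "\<dots> = rstep l (c, m) (rstep l (c, 1) v)" by (rule Suc.IH)
  also have "\<dots> = rstep l (c, Suc m) v"
    by (cases c; cases v) (simp_all add: algebra_simps)
  finally show ?case .
qed

lemma cont_ga: "l0 \<noteq> -1 \<Longrightarrow> isCont ga l0"
proof -
  assume "l0 \<noteq> -1"
  then have "l0 + 1 \<noteq> 0" by (metis add.commute add_eq_0_iff)
  then have "isCont (\<lambda>l. - 1 / (l + 1)) l0" by (intro continuous_intros) auto
  then show ?thesis by (simp add: ga_def[abs_def])
qed

lemma cont_al: "l0 \<noteq> 0 \<Longrightarrow> isCont al l0"
proof -
  assume "l0 \<noteq> 0"
  then have "isCont (\<lambda>l. 1 / l) l0" by (intro continuous_intros) auto
  then show ?thesis by (simp add: al_def[abs_def])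
qed

lemma cont_rstate:
  assumes "l0 \<noteq> 0" "l0 \<noteq> -1" "i \<le> length rs"
  shows "isCont (\<lambda>l. fst (rstate l rs i)) l0 \<and> isCont (\<lambda>l. snd (rstate l rs i)) l0"
  using assms(3)
proof (induction i)
  case 0 then show ?case by simp
next
  case (Suc i)
  then have i: "i < length rs" by simp
  from Suc.IH i have c1: "isCont (\<lambda>l. fst (rstate l rs i)) l0"
    and c2: "isCont (\<lambda>l. snd (rstate l rs i)) l0" by auto
  have ga: "isCont ga l0" using cont_ga assms by auto
  have al: "isCont al l0" using cont_al assms by auto
  obtain c m where r: "rs ! i = (c, m)" by force
  show ?case
  proof (cases c)
    case True
    have "isCont (\<lambda>l. fst (rstate l rs i) + real m * ga l * snd (rstate l rs i)) l0"
      by (intro isCont_add isCont_mult continuous_const c1 c2 ga)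
    then show ?thesis using c2 by (simp add: rstate_Suc[OF i] r True rstep_True)
  next
    case False
    have "isCont (\<lambda>l. snd (rstate l rs i) + real m * al l * fst (rstate l rs i)) l0"
      by (intro isCont_add isCont_mult continuous_const c1 c2 al)
    then show ?thesis using c1 by (simp add: rstate_Suc[OF i] r False rstep_False)
  qed
qed

lemma prod_id1: "(S::real) \<noteq> 0 \<Longrightarrow> T * (S + k * T) = (T * S) * (1 + k * T / S)"
  by (simp add: field_simps)
lemma prod_id2: "(T::real) \<noteq> 0 \<Longrightarrow> (T + k * S) * S = (T * S) * (1 + k * S / T)"
  by (simp add: field_simps)
lemma sgn_helper: "(a::real) * x > 0 \<Longrightarrow> g > 0 \<Longrightarrow> - a * (x * g) > 0 \<Longrightarrow> False"
proof -
  assume h: "a * x > 0" "g > 0" "- a * (x * g) > 0"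
  have "(a * x) * g > 0" using h by simp
  moreover have "- a * (x * g) = - ((a * x) * g)" by simp
  ultimately show False using h(3) by linarith
qed

lemma isCont_within_tendsto: "isCont f x \<Longrightarrow> (f \<longlongrightarrow> f x) (at x within S)"
  by (metis continuous_at_imp_continuous_at_within continuous_within)

lemma boundary:
  assumes sh: "shape rs" and e: "e = 1 \<or> e = -1" and l0: "l0 \<noteq> 0" "l0 \<noteq> -1"
    and F: "at l0 within S \<noteq> bot" and ev: "eventually (\<lambda>l. Cross e l rs) (at l0 within S)"
    and nc: "\<not> Cross e l0 rs"
  shows "fst (rstate l0 rs (length rs)) = 0"
proof -
  let ?F = "at l0 within S"
  let ?N = "length rs"
  define Tf where "Tf i l = fst (rstate l rs i)" for i l
  define Sf where "Sf i l = snd (rstate l rs i)" for i l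
  have limT: "(Tf i \<longlongrightarrow> Tf i l0) ?F" if "i \<le> ?N" for i
    using cont_rstate[OF l0 that] unfolding Tf_def[abs_def] by (intro isCont_within_tendsto) auto
  have limS: "(Sf i \<longlongrightarrow> Sf i l0) ?F" if "i \<le> ?N" for i
    using cont_rstate[OF l0 that] unfolding Sf_def[abs_def] by (intro isCont_within_tendsto) auto
  have limal: "(al \<longlongrightarrow> al l0) ?F" using cont_al[OF l0(1)] by (rule isCont_within_tendsto)
  have limga: "(ga \<longlongrightarrow> ga l0) ?F" using cont_ga[OF l0(2)] by (rule isCont_within_tendsto)
  have pr: "prodr l rs i = Tf i l * Sf i l" for i l by (simp add: prodr_def Tf_def Sf_def)
  have evi: "eventually (\<lambda>l. sg e (fst (rs ! i)) * (Tf (Suc i) l * Sf (Suc i) l) > 0) ?F"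
    if "i < ?N" for i
    using ev by (rule eventually_mono) (use that in \<open>auto simp: Cross_def pr\<close>)
  have ge: "sg e (fst (rs ! i)) * (Tf (Suc i) l0 * Sf (Suc i) l0) \<ge> 0" if "i < ?N" for i
  proof (rule tendsto_lowerbound[OF _ _ F])
    show "((\<lambda>l. sg e (fst (rs ! i)) * (Tf (Suc i) l * Sf (Suc i) l)) \<longlongrightarrow>
        sg e (fst (rs ! i)) * (Tf (Suc i) l0 * Sf (Suc i) l0)) ?F"
      using that by (intro tendsto_intros limT limS) auto
    show "\<forall>\<^sub>F l in ?F. 0 \<le> sg e (fst (rs ! i)) * (Tf (Suc i) l * Sf (Suc i) l)"
      using evi[OF that] by (rule eventually_mono) simp
  qed
  have sgne: "sg e c \<noteq> 0" for c using e by (auto simp: sg_def)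
  have shp: "fst (rs ! i) = odd i" "1 \<le> snd (rs ! i)" if "i < ?N" for i
    using sh that by (auto simp: shape_def)
  have Neven: "even ?N" using sh by (simp add: shape_def)
  have Tf0: "Tf 0 l = 1" "Sf 0 l = 1" for l by (simp_all add: Tf_def Sf_def)
  have stepT: "Tf (Suc i) l = Tf i l + real (snd (rs ! i)) * ga l * Sf i l \<and> Sf (Suc i) l = Sf i l"
    if "i < ?N" "odd i" for i l
    using shp[OF that(1)] that by (cases "rs ! i") (simp add: Tf_def Sf_def rstate_Suc rstep_True)
  have stepF: "Tf (Suc i) l = Tf i l \<and> Sf (Suc i) l = Sf i l + real (snd (rs ! i)) * al l * Tf i l"
    if "i < ?N" "even i" for i l
    using shp[OF that(1)] that by (cases "rs ! i") (simp add: Tf_def Sf_def rstate_Suc rstep_False)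
  define P where "P i \<longleftrightarrow> i < ?N \<and> \<not> (sg e (fst (rs ! i)) * (Tf (Suc i) l0 * Sf (Suc i) l0) > 0)" for i
  have exP: "\<exists>i. P i" using nc by (auto simp: Cross_def P_def pr)
  define j where "j = (LEAST i. P i)"
  have Pj: "P j" unfolding j_def using exP by (metis LeastI_ex)
  have least: "\<not> P i" if "i < j" for i using that unfolding j_def by (rule not_less_Least)
  have jN: "j < ?N" using Pj by (simp add: P_def)
  have z: "Tf (Suc j) l0 * Sf (Suc j) l0 = 0"
  proof -
    have "sg e (fst (rs ! j)) * (Tf (Suc j) l0 * Sf (Suc j) l0) = 0"
      using ge[OF jN] Pj by (simp add: P_def)
    then show ?thesis using sgne by simp
  qed
  have prev: "Tf j l0 \<noteq> 0 \<and> Sf j l0 \<noteq> 0"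
  proof (cases j)
    case 0 then show ?thesis by (simp add: Tf0)
  next
    case (Suc i)
    then have "i < j" "i < ?N" using jN by auto
    then have "sg e (fst (rs ! i)) * (Tf (Suc i) l0 * Sf (Suc i) l0) > 0"
      using least[of i] by (simp add: P_def)
    then show ?thesis using Suc by auto
  qed
  have Fnb: "\<not> eventually (\<lambda>l. False) ?F" using F by simp
  show ?thesis
  proof (cases "odd j")
    case True
    have S1: "Sf (Suc j) l0 \<noteq> 0" using stepT[OF jN True] prev by simp
    then have T1: "Tf (Suc j) l0 = 0" using z by simp
    show ?thesis
    proof (cases "Suc j = ?N")
      case True
      then show ?thesis using T1 by (simp add: Tf_def)
    next
      case False
      then have j1: "Suc j < ?N" using jN by simp
      have ev1: "Suc j \<le> ?N" using j1 by simp
      have ej: "even (Suc j)" using True by simp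
      define k where "k = real (snd (rs ! Suc j))"
      define g where "g l = 1 + k * al l * Tf (Suc j) l / Sf (Suc j) l" for l
      have "(g \<longlongrightarrow> 1 + k * al l0 * Tf (Suc j) l0 / Sf (Suc j) l0) ?F"
        unfolding g_def[abs_def] using S1
        by (intro tendsto_intros limal limT[OF ev1] limS[OF ev1]) auto
      then have "(g \<longlongrightarrow> 1) ?F" using T1 by simp
      then have evg: "eventually (\<lambda>l. g l > 0) ?F" by (rule order_tendstoD) simp
      have ea: "eventually (\<lambda>l. - e * (Tf (Suc j) l * Sf (Suc j) l) > 0) ?F"
        using evi[OF jN] shp(1)[OF jN] True by (simp add: sg_def)
      have eb: "eventually (\<lambda>l. e * (Tf (Suc (Suc j)) l * Sf (Suc (Suc j)) l) > 0) ?F"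
        using evi[OF j1] shp(1)[OF j1] ej by (simp add: sg_def)
      have "eventually (\<lambda>l. False) ?F"
        using ea eb evg
      proof eventually_elim
        case (elim l)
        have Sn: "Sf (Suc j) l \<noteq> 0" using elim(1) by auto
        have "Tf (Suc (Suc j)) l * Sf (Suc (Suc j)) l = (Tf (Suc j) l * Sf (Suc j) l) * g l"
          using stepF[OF j1 ej, of l] prod_id1[OF Sn, of "Tf (Suc j) l" "k * al l"]
          by (simp add: g_def k_def mult.assoc)
        then show False using elim sgn_helper[of "- e" "Tf (Suc j) l * Sf (Suc j) l" "g l"] by simp
      qed
      with Fnb show ?thesis by simp
    qed
  next
    case False
    have T1: "Tf (Suc j) l0 \<noteq> 0" using stepF[OF jN] False prev by simp
    then have S1: "Sf (Suc j) l0 = 0" using z by simp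
    have j1: "Suc j < ?N" using jN False Neven
      by (metis Suc_lessI even_Suc)
    have ev1: "Suc j \<le> ?N" using j1 by simp
    have oj: "odd (Suc j)" using False by simp
    define k where "k = real (snd (rs ! Suc j))"
    define g where "g l = 1 + k * ga l * Sf (Suc j) l / Tf (Suc j) l" for l
    have "(g \<longlongrightarrow> 1 + k * ga l0 * Sf (Suc j) l0 / Tf (Suc j) l0) ?F"
      unfolding g_def[abs_def] using T1
      by (intro tendsto_intros limga limT[OF ev1] limS[OF ev1]) auto
    then have "(g \<longlongrightarrow> 1) ?F" using S1 by simp
    then have evg: "eventually (\<lambda>l. g l > 0) ?F" by (rule order_tendstoD) simp
    have ea: "eventually (\<lambda>l. e * (Tf (Suc j) l * Sf (Suc j) l) > 0) ?F"
      using evi[OF jN] shp(1)[OF jN] False by (simp add: sg_def)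
    have eb: "eventually (\<lambda>l. - e * (Tf (Suc (Suc j)) l * Sf (Suc (Suc j)) l) > 0) ?F"
      using evi[OF j1] shp(1)[OF j1] oj by (simp add: sg_def)
    have "eventually (\<lambda>l. False) ?F"
      using ea eb evg
    proof eventually_elim
      case (elim l)
      have Tn: "Tf (Suc j) l \<noteq> 0" using elim(1) by auto
      have "Tf (Suc (Suc j)) l * Sf (Suc (Suc j)) l = (Tf (Suc j) l * Sf (Suc j) l) * g l"
        using stepT[OF j1 oj, of l] prod_id2[OF Tn, of "k * ga l" "Sf (Suc j) l"]
        by (simp add: g_def k_def mult.assoc)
      then show False using elim sgn_helper[of "e" "Tf (Suc j) l * Sf (Suc j) l" "g l"] by simp
    qed
    with Fnb show ?thesis by simp
  qed
qed

lemma sign_prod: "(T::real) \<noteq> 0 \<Longrightarrow> T * S = (S / T) * T\<^sup>2"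
  by (simp add: power2_eq_square)

lemma prod_pos_iff: "(T::real) \<noteq> 0 \<Longrightarrow> (T * S > 0) = (S / T > 0)"
  by (auto simp: zero_less_mult_iff zero_less_divide_iff)

lemma prod_neg_iff: "(T::real) \<noteq> 0 \<Longrightarrow> (T * S < 0) = (S / T < 0)"
  by (auto simp: mult_less_0_iff divide_less_0_iff)

lemma ratio_F: "(T::real) \<noteq> 0 \<Longrightarrow> (S + k * T) / T = S / T + k"
  by (simp add: field_simps)

lemma ratio_T:
  assumes "(T::real) \<noteq> 0" "1 + k * (S / T) \<noteq> 0"
  shows "T + k * S \<noteq> 0" "S / (T + k * S) = (S / T) / (1 + k * (S / T))"
proof -
  have e: "T + k * S = T * (1 + k * (S / T))" using assms(1) by (simp add: field_simps)
  then show "T + k * S \<noteq> 0" using assms by simp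
  show "S / (T + k * S) = (S / T) / (1 + k * (S / T))" using e assms(1) by simp
qed

lemma L1:
  assumes x: "(x::real) \<le> -1/4" and k: "k \<ge> 6"
  shows "1 + k * x < 0" "0 < x / (1 + k * x)" "x / (1 + k * x) \<le> 1/2"
proof -
  have kx: "k * x \<le> 6 * x" using mult_right_mono_neg[OF k, of x] x by simp
  show d: "1 + k * x < 0" using kx x by linarith
  show "0 < x / (1 + k * x)" using d x by (simp add: divide_neg_neg)
  have "(k - 2) * x \<le> 4 * x" using mult_right_mono_neg[of 4 "k - 2" x] k x by simp
  then have "k * x - 2 * x \<le> 4 * x" by (simp add: left_diff_distrib)
  then have "1 + k * x \<le> 2 * x" using x by linarith
  then have "1/2 * (1 + k * x) \<le> x" by simp
  then show "x / (1 + k * x) \<le> 1/2" using d by (simp add: neg_divide_le_eq)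
qed

lemma L2:
  assumes x: "(x::real) \<ge> 4" and k: "k \<le> -6/7"
  shows "1 + k * x < 0" "x / (1 + k * x) < 0" "-2 \<le> x / (1 + k * x)"
proof -
  have kx: "k * x \<le> (-6/7) * x" using mult_right_mono[OF k, of x] x by simp
  show d: "1 + k * x < 0" using kx x by linarith
  show "x / (1 + k * x) < 0" using d x by (simp add: divide_pos_neg)
  have "x * (1 + 2 * k) \<le> 4 * (1 + 2 * k)"
    using mult_right_mono_neg[OF x, of "1 + 2 * k"] k by simp
  then have "x + 2 * (k * x) \<le> 4 + 8 * k" by (simp add: algebra_simps)
  then have "x + 2 + 2 * (k * x) \<le> 0" using k by linarith
  then have "x \<le> -2 * (1 + k * x)" by (simp add: algebra_simps)
  then show "-2 \<le> x / (1 + k * x)" using d by (simp add: neg_le_divide_eq)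
qed

lemma shapeD:
  assumes "shape rs" "i < length rs"
  shows "rs ! i = (odd i, snd (rs ! i))" "1 \<le> snd (rs ! i)"
  using assms by (auto simp: shape_def prod_eq_iff)

lemma shape_fst: "shape rs \<Longrightarrow> i < length rs \<Longrightarrow> fst (rs ! i) = odd i"
  by (simp add: shape_def)

lemma rstate_Suc_shape:
  assumes "shape rs" "i < length rs"
  shows "rstate l rs (Suc i) = (if odd i
     then (fst (rstate l rs i) + real (snd (rs ! i)) * ga l * snd (rstate l rs i), snd (rstate l rs i))
     else (fst (rstate l rs i), snd (rstate l rs i) + real (snd (rs ! i)) * al l * fst (rstate l rs i)))"
proof -
  obtain c m where r: "rs ! i = (c, m)" by force
  have "c = odd i" using assms r by (auto simp: shape_def)
  then show ?thesis using rstate_Suc[OF assms(2)] r by (simp add: rstep_True rstep_False)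
qed

lemma near_pos:
  assumes sh: "shape rs" and l: "0 < l" "l \<le> 1/6"
  shows "Cross 1 l rs"
proof -
  let ?N = "length rs"
  define x where "x i = snd (rstate l rs i) / fst (rstate l rs i)" for i
  have al: "al l \<ge> 6" using l by (simp add: al_def field_simps)
  have ga: "ga l \<le> -6/7" using l by (simp add: ga_def field_simps)
  have inv: "fst (rstate l rs i) \<noteq> 0 \<and> (i = 0 \<longrightarrow> x i = 1) \<and> (odd i \<longrightarrow> x i \<ge> 4)
      \<and> (0 < i \<and> even i \<longrightarrow> -2 \<le> x i \<and> x i < 0)" if "i \<le> ?N" for i
    using that
  proof (induction i)
    case 0 then show ?case by (simp add: x_def)
  next
    case (Suc i)
    then have i: "i < ?N" by simp
    obtain T S where ts: "rstate l rs i = (T, S)" by force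
    define m where "m = snd (rs ! i)"
    have m1: "real m \<ge> 1" using shapeD(2)[OF sh i] by (simp add: m_def)
    from Suc.IH i have T: "T \<noteq> 0" and IH: "(i = 0 \<longrightarrow> S/T = 1) \<and> (odd i \<longrightarrow> S/T \<ge> 4)
      \<and> (0 < i \<and> even i \<longrightarrow> -2 \<le> S/T \<and> S/T < 0)" using ts by (auto simp: x_def)
    show ?case
    proof (cases "odd i")
      case True
      have rs: "rstate l rs (Suc i) = (T + (real m * ga l) * S, S)"
        using rstate_Suc_shape[OF sh i] True ts by (simp add: m_def)
      have k: "real m * ga l \<le> -6/7"
      proof -
        have g0: "ga l \<le> 0" using ga by linarith
        have "real m * ga l \<le> 1 * ga l" by (rule mult_right_mono_neg[OF m1 g0])
        then show ?thesis using ga by linarith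
      qed
      have x4: "S / T \<ge> 4" using IH True by simp
      note L = L2[OF x4 k]
      have ne: "1 + real m * ga l * (S / T) \<noteq> 0" using L(1) by simp
      have r1: "fst (rstate l rs (Suc i)) \<noteq> 0" using rs ratio_T(1)[OF T ne] by simp
      have r2: "x (Suc i) = (S/T)/(1 + real m * ga l * (S/T))" using rs ratio_T(2)[OF T ne] by (simp add: x_def)
      have "-2 \<le> x (Suc i) \<and> x (Suc i) < 0" unfolding r2 using L by linarith
      then show ?thesis using r1 True by simp
    next
      case False
      have rs: "rstate l rs (Suc i) = (T, S + (real m * al l) * T)"
        using rstate_Suc_shape[OF sh i] False ts by (simp add: m_def)
      have k: "real m * al l \<ge> 6"
      proof -
        have g0: "al l \<ge> 0" using al by linarith
        have "real m * al l \<ge> 1 * al l" by (rule mult_right_mono[OF m1 g0])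
        then show ?thesis using al by linarith
      qed
      have "S / T \<ge> -2" using IH False by (cases "i = 0") auto
      then have "x (Suc i) \<ge> 4" using ratio_F[OF T, of S "real m * al l"] k by (simp add: rs x_def)
      then show ?thesis using False T by (simp add: rs)
    qed
  qed
  show ?thesis unfolding Cross_def
  proof (intro allI impI)
    fix i assume i: "i < ?N"
    have I: "fst (rstate l rs (Suc i)) \<noteq> 0 \<and> (odd (Suc i) \<longrightarrow> x (Suc i) \<ge> 4)
      \<and> (even (Suc i) \<longrightarrow> -2 \<le> x (Suc i) \<and> x (Suc i) < 0)" using inv[of "Suc i"] i by simp
    show "0 < sg 1 (fst (rs ! i)) * prodr l rs (Suc i)"
    proof (cases "odd i")
      case True
      then show ?thesis using I shape_fst[OF sh i] prod_neg_iff[of "fst (rstate l rs (Suc i))"]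
        by (simp add: sg_def prodr_def x_def)
    next
      case False
      then show ?thesis using I shape_fst[OF sh i] prod_pos_iff[of "fst (rstate l rs (Suc i))"]
        by (simp add: sg_def prodr_def x_def)
    qed
  qed
qed

lemma near_neg:
  assumes sh: "shape rs" and r0: "snd (rs ! 0) \<ge> 2" and l: "-7/6 \<le> l" "l < -1"
  shows "Cross (-1) l rs"
proof -
  let ?N = "length rs"
  define x where "x i = snd (rstate l rs i) / fst (rstate l rs i)" for i
  have al: "al l \<le> -6/7" using l by (simp add: al_def field_simps)
  have ga: "ga l \<ge> 6" using l by (simp add: ga_def field_simps)
  have inv: "fst (rstate l rs i) \<noteq> 0 \<and> (i = 0 \<longrightarrow> x i = 1) \<and> (odd i \<longrightarrow> x i \<le> -1/4)
      \<and> (0 < i \<and> even i \<longrightarrow> 0 < x i \<and> x i \<le> 1/2)" if "i \<le> ?N" for i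
    using that
  proof (induction i)
    case 0 then show ?case by (simp add: x_def)
  next
    case (Suc i)
    then have i: "i < ?N" by simp
    obtain T S where ts: "rstate l rs i = (T, S)" by force
    define m where "m = snd (rs ! i)"
    have m1: "real m \<ge> 1" using shapeD(2)[OF sh i] by (simp add: m_def)
    from Suc.IH i have T: "T \<noteq> 0" and IH: "(i = 0 \<longrightarrow> S/T = 1) \<and> (odd i \<longrightarrow> S/T \<le> -1/4)
      \<and> (0 < i \<and> even i \<longrightarrow> 0 < S/T \<and> S/T \<le> 1/2)" using ts by (auto simp: x_def)
    show ?case
    proof (cases "odd i")
      case True
      have rs: "rstate l rs (Suc i) = (T + (real m * ga l) * S, S)"
        using rstate_Suc_shape[OF sh i] True ts by (simp add: m_def)
      have k: "real m * ga l \<ge> 6"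
      proof -
        have g0: "ga l \<ge> 0" using ga by linarith
        have "real m * ga l \<ge> 1 * ga l" by (rule mult_right_mono[OF m1 g0])
        then show ?thesis using ga by linarith
      qed
      have x4: "S / T \<le> -1/4" using IH True by simp
      note L = L1[OF x4 k]
      have ne: "1 + real m * ga l * (S / T) \<noteq> 0" using L(1) by simp
      have r1: "fst (rstate l rs (Suc i)) \<noteq> 0" using rs ratio_T(1)[OF T ne] by simp
      have r2: "x (Suc i) = (S/T)/(1 + real m * ga l * (S/T))" using rs ratio_T(2)[OF T ne] by (simp add: x_def)
      have "0 < x (Suc i) \<and> x (Suc i) \<le> 1/2" unfolding r2 using L by linarith
      then show ?thesis using r1 True by simp
    next
      case False
      have rs: "rstate l rs (Suc i) = (T, S + (real m * al l) * T)"
        using rstate_Suc_shape[OF sh i] False ts by (simp add: m_def)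
      have "S / T + real m * al l \<le> -1/4"
      proof (cases "i = 0")
        case True
        have m2: "real m \<ge> 2" using r0 True by (simp add: m_def)
        have g0: "al l \<le> 0" using al by linarith
        have "real m * al l \<le> 2 * al l" by (rule mult_right_mono_neg[OF m2 g0])
        moreover have "S / T = 1" using IH True by simp
        ultimately show ?thesis using al by linarith
      next
        case False
        have g0: "al l \<le> 0" using al by linarith
        have "real m * al l \<le> 1 * al l" by (rule mult_right_mono_neg[OF m1 g0])
        moreover have "S / T \<le> 1/2" using IH False \<open>\<not> odd i\<close> by simp
        ultimately show ?thesis using al by linarith
      qed
      then have "x (Suc i) \<le> -1/4" using ratio_F[OF T, of S "real m * al l"] by (simp add: rs x_def)
      then show ?thesis using False T by (simp add: rs)
    qed
  qed
  show ?thesis unfolding Cross_def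
  proof (intro allI impI)
    fix i assume i: "i < ?N"
    have I: "fst (rstate l rs (Suc i)) \<noteq> 0 \<and> (odd (Suc i) \<longrightarrow> x (Suc i) \<le> -1/4)
      \<and> (even (Suc i) \<longrightarrow> 0 < x (Suc i) \<and> x (Suc i) \<le> 1/2)" using inv[of "Suc i"] i by simp
    show "0 < sg (-1) (fst (rs ! i)) * prodr l rs (Suc i)"
    proof (cases "odd i")
      case True
      then show ?thesis using I shape_fst[OF sh i] prod_pos_iff[of "fst (rstate l rs (Suc i))"]
        by (simp add: sg_def prodr_def x_def)
    next
      case False
      then show ?thesis using I shape_fst[OF sh i] prod_neg_iff[of "fst (rstate l rs (Suc i))"]
        by (simp add: sg_def prodr_def x_def)
    qed
  qed
qed

lemma cross_open:
  assumes l0: "l0 \<noteq> 0" "l0 \<noteq> -1" and c: "Cross e l0 rs"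
  shows "eventually (\<lambda>l. Cross e l rs) (at l0)"
proof -
  have "\<forall>i\<in>{..<length rs}. eventually (\<lambda>l. sg e (fst (rs ! i)) * prodr l rs (Suc i) > 0) (at l0)"
  proof
    fix i assume "i \<in> {..<length rs}"
    then have i: "Suc i \<le> length rs" by simp
    have cc: "isCont (\<lambda>l. fst (rstate l rs (Suc i))) l0" "isCont (\<lambda>l. snd (rstate l rs (Suc i))) l0"
      using cont_rstate[OF l0 i] by auto
    have "((\<lambda>l. sg e (fst (rs ! i)) * prodr l rs (Suc i)) \<longlongrightarrow>
        sg e (fst (rs ! i)) * prodr l0 rs (Suc i)) (at l0)"
      unfolding prodr_def
      by (intro tendsto_intros cc[unfolded isCont_def])
    moreover have "sg e (fst (rs ! i)) * prodr l0 rs (Suc i) > 0"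
      using c \<open>i \<in> {..<length rs}\<close> by (simp add: Cross_def)
    ultimately show "eventually (\<lambda>l. sg e (fst (rs ! i)) * prodr l rs (Suc i) > 0) (at l0)"
      by (rule order_tendstoD)
  qed
  then have "eventually (\<lambda>l. \<forall>i\<in>{..<length rs}. sg e (fst (rs ! i)) * prodr l rs (Suc i) > 0) (at l0)"
    by (rule eventually_ball_finite[rotated]) simp
  then show ?thesis by (rule eventually_mono) (simp add: Cross_def)
qed

lemma exists_pos:
  assumes sh: "shape rs" and l1: "0 < l1" and nc: "\<not> Cross 1 l1 rs"
  shows "\<exists>l0. 0 < l0 \<and> l0 \<le> l1 \<and> fst (rstate l0 rs (length rs)) = 0"
proof -
  have l16: "l1 > 1/6" using near_pos[OF sh l1] nc by force
  define K where "K = {l. 1/6 \<le> l \<and> l \<le> l1 \<and> \<not> Cross 1 l rs}"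
  have l1K: "l1 \<in> K" using l16 nc by (simp add: K_def)
  have bdd: "bdd_below K" unfolding K_def by (rule bdd_belowI[of _ "1/6"]) auto
  have Kne: "K \<noteq> {}" using l1K by auto
  define l0 where "l0 = Inf K"
  have lo: "1/6 \<le> l0" unfolding l0_def using Kne by (rule cInf_greatest) (simp add: K_def)
  have hi: "l0 \<le> l1" unfolding l0_def using l1K bdd by (rule cInf_lower)
  have c16: "Cross 1 (1/6) rs" using near_pos[OF sh] by simp
  have nc0: "\<not> Cross 1 l0 rs"
  proof
    assume c: "Cross 1 l0 rs"
    have "l0 \<noteq> 0" "l0 \<noteq> -1" using lo by auto
    from cross_open[OF this c] obtain d where d: "d > 0"
      and dd: "\<And>x. x \<noteq> l0 \<Longrightarrow> dist x l0 < d \<Longrightarrow> Cross 1 x rs"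
      unfolding eventually_at by auto
    have "Inf K < l0 + d" using d by (simp add: l0_def)
    then obtain k where k: "k \<in> K" "k < l0 + d" using cInf_less_iff[OF Kne bdd] by auto
    have "l0 \<le> k" unfolding l0_def using k(1) bdd by (rule cInf_lower)
    show False
    proof (cases "k = l0")
      case True then show False using k(1) c by (simp add: K_def)
    next
      case False
      then have "Cross 1 k rs" using dd[of k] k(2) \<open>l0 \<le> k\<close> by (simp add: dist_real_def)
      then show False using k(1) by (simp add: K_def)
    qed
  qed
  have lo': "1/6 < l0" using lo nc0 c16 by (cases "l0 = 1/6") auto
  have ev: "eventually (\<lambda>l. Cross 1 l rs) (at_left l0)"
  proof -
    have ev0: "eventually (\<lambda>x. x \<in> {0<..<l0}) (at_left l0)" using lo' by (intro eventually_at_left_real) simp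
    show ?thesis using ev0
  proof (rule eventually_mono)
    fix x assume x: "x \<in> {0<..<l0}"
    show "Cross 1 x rs"
    proof (cases "x \<le> 1/6")
      case True then show ?thesis using near_pos[OF sh] x by simp
    next
      case False
      have "x \<notin> K"
      proof
        assume "x \<in> K"
        then have "l0 \<le> x" unfolding l0_def using bdd by (rule cInf_lower)
        then show False using x by simp
      qed
      then show ?thesis using False x hi by (simp add: K_def)
    qed
  qed
  qed
  have Fnb: "at_left l0 \<noteq> bot" using trivial_limit_at_left_real[of l0] by simp
  have "fst (rstate l0 rs (length rs)) = 0"
    using lo' by (intro boundary[OF sh _ _ _ Fnb ev nc0]) auto
  then show ?thesis using lo' hi by (intro exI[of _ l0]) auto
qed

lemma exists_neg:
  assumes sh: "shape rs" and r0: "snd (rs ! 0) \<ge> 2" and l1: "l1 < -1" and nc: "\<not> Cross (-1) l1 rs"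
  shows "\<exists>l0. l1 \<le> l0 \<and> l0 < -1 \<and> fst (rstate l0 rs (length rs)) = 0"
proof -
  have l16: "l1 < -7/6" using near_neg[OF sh r0 _ l1] nc by force
  define K where "K = {l. l1 \<le> l \<and> l \<le> -7/6 \<and> \<not> Cross (-1) l rs}"
  have l1K: "l1 \<in> K" using l16 nc by (simp add: K_def)
  have bdd: "bdd_above K" unfolding K_def by (rule bdd_aboveI[of _ "-7/6"]) auto
  have Kne: "K \<noteq> {}" using l1K by auto
  define l0 where "l0 = Sup K"
  have hi: "l0 \<le> -7/6" unfolding l0_def using Kne by (rule cSup_least) (simp add: K_def)
  have lo: "l1 \<le> l0" unfolding l0_def using l1K bdd by (rule cSup_upper)
  have c16: "Cross (-1) (-7/6) rs" using near_neg[OF sh r0] by simp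
  have nc0: "\<not> Cross (-1) l0 rs"
  proof
    assume c: "Cross (-1) l0 rs"
    have "l0 \<noteq> 0" "l0 \<noteq> -1" using hi by auto
    from cross_open[OF this c] obtain d where d: "d > 0"
      and dd: "\<And>x. x \<noteq> l0 \<Longrightarrow> dist x l0 < d \<Longrightarrow> Cross (-1) x rs"
      unfolding eventually_at by auto
    have "l0 - d < Sup K" using d by (simp add: l0_def)
    then obtain k where k: "k \<in> K" "l0 - d < k" using less_cSup_iff[OF Kne bdd] by auto
    have "k \<le> l0" unfolding l0_def using k(1) bdd by (rule cSup_upper)
    show False
    proof (cases "k = l0")
      case True then show False using k(1) c by (simp add: K_def)
    next
      case False
      then have "Cross (-1) k rs" using dd[of k] k(2) \<open>k \<le> l0\<close> by (simp add: dist_real_def)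
      then show False using k(1) by (simp add: K_def)
    qed
  qed
  have hi': "l0 < -7/6" using hi nc0 c16 by (cases "l0 = -7/6") auto
  have ev: "eventually (\<lambda>l. Cross (-1) l rs) (at_right l0)"
  proof -
    have ev0: "eventually (\<lambda>x. x \<in> {l0<..<-1}) (at_right l0)" using hi' by (intro eventually_at_right_real) simp
    show ?thesis using ev0
  proof (rule eventually_mono)
    fix x assume x: "x \<in> {l0<..<-1}"
    show "Cross (-1) x rs"
    proof (cases "x \<ge> -7/6")
      case True then show ?thesis using near_neg[OF sh r0] x by simp
    next
      case False
      have "x \<notin> K"
      proof
        assume "x \<in> K"
        then have "x \<le> l0" unfolding l0_def using bdd by (rule cSup_upper)
        then show False using x by simp
      qed
      then show ?thesis using False x lo by (simp add: K_def)
    qed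
  qed
  qed
  have Fnb: "at_right l0 \<noteq> bot" using trivial_limit_at_right_real[of l0] by simp
  have "fst (rstate l0 rs (length rs)) = 0"
    using hi' by (intro boundary[OF sh _ _ _ Fnb ev nc0]) auto
  then show ?thesis using lo hi' by (intro exI[of _ l0]) auto
qed

definition hsA :: "nat \<Rightarrow> (bool \<times> nat) list" where
  "hsA k = map (\<lambda>i. (odd i, if i = 0 then 2 else 1)) [0..<2 * k]"

definition runsB :: "nat list \<Rightarrow> nat list \<Rightarrow> nat \<Rightarrow> (bool \<times> nat) list" where
  "runsB s t k = map (\<lambda>i. (odd i, if odd i then t ! (i div 2) else s ! (i div 2))) [0..<2 * k]"

definition blocks :: "nat list \<Rightarrow> nat list \<Rightarrow> nat \<Rightarrow> bool list" where
  "blocks s t k = concat (map (\<lambda>i. replicate (s ! i) False @ replicate (t ! i) True) [0..<k])"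

abbreviation sfold :: "real \<Rightarrow> real \<times> real \<Rightarrow> bool list \<Rightarrow> real \<times> real" where
  "sfold l v b \<equiv> foldl (\<lambda>v c. rstep l (c, 1) v) v b"

abbreviation rfold :: "real \<Rightarrow> real \<times> real \<Rightarrow> (bool \<times> nat) list \<Rightarrow> real \<times> real" where
  "rfold l v rs \<equiv> foldl (\<lambda>v r. rstep l r v) v rs"

lemma rstate_full: "rstate l rs (length rs) = rfold l (1, 1) rs"
  by (simp add: rstate_def)

lemma hsA_Suc: "k \<ge> 1 \<Longrightarrow> hsA (Suc k) = hsA k @ [(False, 1), (True, 1)]"
proof -
  assume k: "k \<ge> 1"
  have "[0..<2 * Suc k] = [0..<2 * k] @ [2 * k, Suc (2 * k)]" by simp
  then show ?thesis using k by (simp add: hsA_def)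
qed

lemma hsA_1: "hsA (Suc 0) = [(False, 2), (True, 1)]"
  by (simp add: hsA_def upt_rec)

lemma concat_rep_Suc: "concat (replicate (Suc k) xs) = concat (replicate k xs) @ xs"
  by (induction k) auto

lemma fold_A:
  assumes "k \<ge> 1"
  shows "sfold l v (False # concat (replicate k [False, True])) = rfold l v (hsA k)"
  using assms
proof (induction k)
  case 0 then show ?case by simp
next
  case (Suc k)
  show ?case
  proof (cases "k = 0")
    case True
    have "rstep l (False, 1) (rstep l (False, 1) v) = rstep l (False, 2) v"
      by (cases v) simp
    then show ?thesis using True by (simp add: hsA_1)
  next
    case False
    then have k: "k \<ge> 1" by simp
    have "sfold l v (False # concat (replicate (Suc k) [False, True]))
        = sfold l (sfold l v (False # concat (replicate k [False, True]))) [False, True]"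
      by (subst concat_rep_Suc) simp
    also have "\<dots> = rfold l (rfold l v (hsA k)) [(False, 1), (True, 1)]"
      using Suc.IH[OF k] by simp
    also have "\<dots> = rfold l v (hsA (Suc k))" by (simp add: hsA_Suc[OF k])
    finally show ?thesis .
  qed
qed

lemma traj_A:
  assumes "odd n" "n \<ge> 3"
  shows "traj l (anti_regular_string n) = rstate l (hsA (n div 2)) (length (hsA (n div 2)))"
  using assms fold_A[of "n div 2" l "(1,1)"]
  by (simp add: anti_regular_string_def traj_def rstate_full)

lemma length_hsA[simp]: "length (hsA k) = 2 * k" by (simp add: hsA_def)

lemma hsA_nth: "i < 2 * k \<Longrightarrow> hsA k ! i = (odd i, if i = 0 then 2 else 1)"
  by (simp add: hsA_def)

lemma shape_hsA: "k \<ge> 1 \<Longrightarrow> shape (hsA k)"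
  by (auto simp: shape_def hsA_nth)

lemma fold_B: "sfold l v (blocks s t k) = rfold l v (runsB s t k)"
proof (induction k arbitrary: v)
  case 0 then show ?case by (simp add: blocks_def runsB_def)
next
  case (Suc k)
  have r: "runsB s t (Suc k) = runsB s t k @ [(False, s ! k), (True, t ! k)]"
  proof -
    have "[0..<2 * Suc k] = [0..<2 * k] @ [2 * k, Suc (2 * k)]" by simp
    then show ?thesis by (simp add: runsB_def)
  qed
  have b: "blocks s t (Suc k) = blocks s t k @ replicate (s ! k) False @ replicate (t ! k) True"
    by (simp add: blocks_def)
  show ?case using Suc.IH by (simp add: r b fold_replicate[simplified])
qed

lemma length_runsB[simp]: "length (runsB s t k) = 2 * k" by (simp add: runsB_def)

lemma runsB_nth: "i < 2 * k \<Longrightarrow> runsB s t k ! i = (odd i, if odd i then t ! (i div 2) else s ! (i div 2))"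
  by (simp add: runsB_def)

lemma shape_runsB:
  assumes "k \<ge> 1" "\<forall>i<k. 1 \<le> s ! i \<and> 1 \<le> t ! i"
  shows "shape (runsB s t k)"
  unfolding shape_def using assms by (auto simp: runsB_nth)

lemma length_blocks: "length (blocks s t k) = (\<Sum>i<k. s ! i + t ! i)"
  by (induction k) (simp_all add: blocks_def)

lemma traj_B: "traj l (blocks s t k) = rstate l (runsB s t k) (2 * k)"
  using fold_B[of l "(1,1)" s t k] by (simp add: traj_def rstate_def)

definition xr :: "real \<Rightarrow> (bool \<times> nat) list \<Rightarrow> nat \<Rightarrow> real" where
  "xr l rs i = snd (rstate l rs i) / fst (rstate l rs i)"

lemma cross_T0:
  assumes "Cross e l rs" "i \<le> length rs"
  shows "fst (rstate l rs i) \<noteq> 0"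
proof (cases i)
  case 0 then show ?thesis by simp
next
  case (Suc j)
  then have "sg e (fst (rs ! j)) * prodr l rs (Suc j) > 0" using assms by (simp add: Cross_def)
  then show ?thesis using Suc by (auto simp: prodr_def)
qed

lemma cross_sign_pos:
  assumes sh: "shape rs" and c: "Cross 1 l rs" and i: "i < length rs"
  shows "(odd i \<longrightarrow> xr l rs (Suc i) < 0) \<and> (even i \<longrightarrow> xr l rs (Suc i) > 0)"
proof -
  have T: "fst (rstate l rs (Suc i)) \<noteq> 0" using cross_T0[OF c] i by simp
  have "sg 1 (fst (rs ! i)) * prodr l rs (Suc i) > 0" using c i by (simp add: Cross_def)
  then show ?thesis using shape_fst[OF sh i] prod_pos_iff[OF T] prod_neg_iff[OF T]
    by (auto simp: sg_def prodr_def xr_def)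
qed

lemma cross_sign_neg:
  assumes sh: "shape rs" and c: "Cross (-1) l rs" and i: "i < length rs"
  shows "(odd i \<longrightarrow> xr l rs (Suc i) > 0) \<and> (even i \<longrightarrow> xr l rs (Suc i) < 0)"
proof -
  have T: "fst (rstate l rs (Suc i)) \<noteq> 0" using cross_T0[OF c] i by simp
  have "sg (-1) (fst (rs ! i)) * prodr l rs (Suc i) > 0" using c i by (simp add: Cross_def)
  then show ?thesis using shape_fst[OF sh i] prod_pos_iff[OF T] prod_neg_iff[OF T]
    by (auto simp: sg_def prodr_def xr_def)
qed

lemma xr_F:
  assumes sh: "shape rs" and i: "i < length rs" "even i" and T: "fst (rstate l rs i) \<noteq> 0"
  shows "fst (rstate l rs (Suc i)) = fst (rstate l rs i) \<and> xr l rs (Suc i) = xr l rs i + real (snd (rs ! i)) * al l"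
  using rstate_Suc_shape[OF sh i(1), of l] i(2) ratio_F[OF T] by (simp add: xr_def)

lemma xr_T:
  assumes sh: "shape rs" and i: "i < length rs" "odd i" and T: "fst (rstate l rs i) \<noteq> 0"
    and T1: "fst (rstate l rs (Suc i)) \<noteq> 0"
  shows "1 + real (snd (rs ! i)) * ga l * xr l rs i \<noteq> 0 \<and>
    xr l rs (Suc i) = xr l rs i / (1 + real (snd (rs ! i)) * ga l * xr l rs i)"
proof -
  let ?T = "fst (rstate l rs i)" and ?S = "snd (rstate l rs i)" and ?k = "real (snd (rs ! i)) * ga l"
  have rs: "rstate l rs (Suc i) = (?T + ?k * ?S, ?S)" using rstate_Suc_shape[OF sh i(1), of l] i(2) by simp
  have e: "?T + ?k * ?S = ?T * (1 + ?k * (?S / ?T))" using T by (simp add: field_simps)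
  have ne: "1 + ?k * (?S / ?T) \<noteq> 0" using T1 rs e by auto
  show ?thesis using ratio_T(2)[OF T ne] ne rs by (simp add: xr_def)
qed

lemma mono_T:
  assumes d: "(1 + k * x) * (1 + k * h) > (0::real)" and xh: "x \<le> h"
  shows "x / (1 + k * x) \<le> h / (1 + k * h)"
proof -
  have d1: "1 + k * x \<noteq> 0" and d2: "1 + k * h \<noteq> 0" using d by auto
  have "x / (1 + k * x) - h / (1 + k * h) = (x - h) / ((1 + k * x) * (1 + k * h))"
    using d1 d2 by (simp add: field_simps)
  moreover have "(x - h) / ((1 + k * x) * (1 + k * h)) \<le> 0"
    using d xh by (intro divide_nonpos_pos) auto
  ultimately show ?thesis by simp
qed

lemma mono_k:
  assumes x: "(x::real) > 0" and k: "k \<le> k0" and d: "1 + k0 * x < 0"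
  shows "x / (1 + k0 * x) \<le> x / (1 + k * x)"
proof -
  have kx: "k * x \<le> k0 * x" using mult_right_mono[OF k] x by simp
  then have d1: "1 + k * x < 0" using d by linarith
  have "x / (1 + k0 * x) - x / (1 + k * x) = x * ((k - k0) * x) / ((1 + k * x) * (1 + k0 * x))"
    using d1 d by (simp add: field_simps)
  moreover have "x * ((k - k0) * x) / ((1 + k * x) * (1 + k0 * x)) \<le> 0"
  proof (rule divide_nonpos_pos)
    show "x * ((k - k0) * x) \<le> 0" using x k by (simp add: mult_nonneg_nonpos mult_nonpos_nonneg)
    show "0 < (1 + k * x) * (1 + k0 * x)" using d1 d by (simp add: mult_neg_neg)
  qed
  ultimately show ?thesis by simp
qed

lemma hA_1:
  assumes K: "K \<ge> 1" and c: "Cross e l (hsA K)"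
  shows "xr l (hsA K) 1 = 1 + 2 * al l"
proof -
  have sh: "shape (hsA K)" by (rule shape_hsA[OF K])
  have "0 < length (hsA K)" using K by simp
  have h0: "hsA K ! 0 = (False, 2)" using hsA_nth[of 0 K] K by simp
  have x0: "xr l (hsA K) 0 = 1" by (simp add: xr_def)
  from xr_F[OF sh \<open>0 < length (hsA K)\<close>, of l] show ?thesis by (simp add: x0 h0)
qed

lemma hA_odd:
  assumes K: "K \<ge> 1" and c: "Cross e l (hsA K)" and j: "1 \<le> j" "2 * j + 1 \<le> 2 * K"
  shows "xr l (hsA K) (2 * j + 1) = xr l (hsA K) (2 * j) + al l"
proof -
  have sh: "shape (hsA K)" by (rule shape_hsA[OF K])
  have i: "2 * j < length (hsA K)" "even (2 * j)" using j by auto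
  have T: "fst (rstate l (hsA K) (2 * j)) \<noteq> 0" using cross_T0[OF c] j by simp
  from xr_F[OF sh i T] show ?thesis using j by (simp add: hsA_nth)
qed

lemma hA_even:
  assumes K: "K \<ge> 1" and c: "Cross e l (hsA K)" and j: "2 * j + 2 \<le> 2 * K"
  shows "1 + ga l * xr l (hsA K) (2 * j + 1) \<noteq> 0 \<and>
    xr l (hsA K) (2 * j + 2) = xr l (hsA K) (2 * j + 1) / (1 + ga l * xr l (hsA K) (2 * j + 1))"
proof -
  have sh: "shape (hsA K)" by (rule shape_hsA[OF K])
  have i: "2 * j + 1 < length (hsA K)" "odd (2 * j + 1)" using j by auto
  have T: "fst (rstate l (hsA K) (2 * j + 1)) \<noteq> 0" using cross_T0[OF c] j by simp
  have T1: "fst (rstate l (hsA K) (Suc (2 * j + 1))) \<noteq> 0" using cross_T0[OF c] j by simp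
  from xr_T[OF sh i T T1] show ?thesis using j by (simp add: hsA_nth)
qed

lemma tE_T:
  assumes "0 < (x::real)" "0 < g"
  shows "1 + g * x \<noteq> 0 \<and> 0 < x / (1 + g * x) \<and> x / (1 + g * x) \<le> x"
proof -
  have "g * x > 0" using assms by simp
  then have d: "1 + g * x \<ge> 1" by linarith
  have d0: "0 < 1 + g * x" using d by linarith
  have "x / (1 + g * x) \<le> x / 1" using d d0 assms by (intro divide_left_mono) auto
  moreover have "0 < x / (1 + g * x)" using d0 assms by simp
  ultimately show ?thesis using d0 by simp
qed

lemma tU_T:
  assumes xh: "x \<le> h" and h: "h < (0::real)" and g: "0 < g" and h': "0 < h / (1 + g * h)"
  shows "1 + g * x \<noteq> 0 \<and> 0 < x / (1 + g * x) \<and> x / (1 + g * x) \<le> h / (1 + g * h)"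
proof -
  have dh: "1 + g * h < 0" using h h' by (simp add: zero_less_divide_iff)
  have "g * x \<le> g * h" using mult_left_mono[OF xh] g by simp
  then have dx: "1 + g * x < 0" using dh by linarith
  have x: "x < 0" using xh h by simp
  have "0 < x / (1 + g * x)" using x dx by (simp add: zero_less_divide_iff)
  moreover have "x / (1 + g * x) \<le> h / (1 + g * h)"
    using dx dh xh by (intro mono_T) (simp_all add: mult_neg_neg)
  ultimately show ?thesis using dx by simp
qed

lemma traj_step_F:
  assumes "m < length b" "\<not> b ! m"
  shows "traj l (take (Suc m) b) = (fst (traj l (take m b)), snd (traj l (take m b)) + al l * fst (traj l (take m b)))"
  using traj_take_Suc[OF assms(1), of l] assms(2) by (cases "traj l (take m b)") simp

lemma traj_step_T:
  assumes "m < length b" "b ! m"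
  shows "traj l (take (Suc m) b) = (fst (traj l (take m b)) + ga l * snd (traj l (take m b)), snd (traj l (take m b)))"
  using traj_take_Suc[OF assms(1), of l] assms(2) by (cases "traj l (take m b)") simp

lemma auto_i:
  assumes K: "K \<ge> 1" and len: "length b = 2 * K + 1" and b0: "b ! 0 = False"
    and l: "l < -1" and c: "Cross (-1) l (hsA K)"
  shows "fst (traj l b) \<noteq> 0"
proof -
  define h where "h = xr l (hsA K)"
  define X where "X m = traj l (take m b)" for m
  define x where "x m = snd (X m) / fst (X m)" for m
  let ?n = "2 * K + 1"
  have sh: "shape (hsA K)" by (rule shape_hsA[OF K])
  have al: "-1 < al l" "al l < 0" using l by (auto simp: al_def field_simps)
  have ga: "0 < ga l" using l by (simp add: ga_def field_simps)
  have h1: "h 1 = 1 + 2 * al l" unfolding h_def by (rule hA_1[OF K c])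
  have hodd: "h (2 * j + 1) = h (2 * j) + al l" if "1 \<le> j" "2 * j + 1 \<le> 2 * K" for j
    unfolding h_def by (rule hA_odd[OF K c that])
  have heven: "h (2 * j + 2) = h (2 * j + 1) / (1 + ga l * h (2 * j + 1))" if "2 * j + 2 \<le> 2 * K" for j
    using hA_even[OF K c that] by (simp add: h_def)
  have hsg: "(odd i \<longrightarrow> h (Suc i) > 0) \<and> (even i \<longrightarrow> h (Suc i) < 0)" if "i < 2 * K" for i
    using cross_sign_neg[OF sh c] that by (simp add: h_def)
  define E where "E y \<longleftrightarrow> 0 < y \<and> y \<le> 1 + al l" for y
  define U where "U m y \<longleftrightarrow> (\<exists>j. 2 * j + 2 \<le> m \<and> y \<le> h (2 * j + 1))" for m y
  define C where "C m y \<longleftrightarrow> (\<exists>j. 2 * j + 3 \<le> m \<and> 0 < y \<and> y \<le> h (2 * j + 2))" for m y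
  have inv: "fst (X m) \<noteq> 0 \<and> (E (x m) \<or> U m (x m) \<or> C m (x m))" if "1 \<le> m" "m \<le> ?n" for m
    using that
  proof (induction m)
    case 0 then show ?case by simp
  next
    case (Suc m)
    show ?case
    proof (cases "m = 0")
      case True
      have "X 1 = (1, 1 + al l)" using traj_step_F[of 0 b l] b0 len by (simp add: X_def traj_def)
      then show ?thesis using True al by (simp add: x_def E_def)
    next
      case False
      then have m1: "1 \<le> m" and mn: "m < length b" using Suc.prems len by auto
      from Suc.IH m1 mn len have T: "fst (X m) \<noteq> 0" and ty0: "E (x m) \<or> U m (x m) \<or> C m (x m)" by auto
      show ?thesis
      proof (cases "b ! m")
        case False
        have XS: "X (Suc m) = (fst (X m), snd (X m) + al l * fst (X m))"
          using traj_step_F[OF mn False] by (simp add: X_def)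
        have xs: "x (Suc m) = x m + al l" using XS ratio_F[OF T] by (simp add: x_def)
        have T': "fst (X (Suc m)) \<noteq> 0" using XS T by simp
        have "E (x (Suc m)) \<or> U (Suc m) (x (Suc m)) \<or> C (Suc m) (x (Suc m))"
        proof -
          { assume "E (x m)"
            then have "x (Suc m) \<le> h (2 * 0 + 1)" using xs h1 by (simp add: E_def)
            then have "U (Suc m) (x (Suc m))" unfolding U_def using m1 by (intro exI[of _ 0]) simp }
          moreover
          { fix j assume j: "2 * j + 2 \<le> m" "x m \<le> h (2 * j + 1)"
            then have "x (Suc m) \<le> h (2 * j + 1)" using xs al by simp
            then have "U (Suc m) (x (Suc m))" unfolding U_def using j by (intro exI[of _ j]) simp }
          moreover
          { fix j assume j: "2 * j + 3 \<le> m" "0 < x m" "x m \<le> h (2 * j + 2)"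
            have "2 * (j + 1) + 1 \<le> 2 * K" using j mn len by simp
            then have "h (2 * (j + 1) + 1) = h (2 * (j + 1)) + al l" by (intro hodd) auto
            then have "x (Suc m) \<le> h (2 * (j + 1) + 1)" using xs j by simp
            then have "U (Suc m) (x (Suc m))" unfolding U_def using j by (intro exI[of _ "j + 1"]) simp }
          ultimately show ?thesis using ty0 unfolding U_def C_def by blast
        qed
        then show ?thesis using T' by simp
      next
        case True
        have XS: "X (Suc m) = (fst (X m) + ga l * snd (X m), snd (X m))"
          using traj_step_T[OF mn True] by (simp add: X_def)
        have key: "\<And>z. 1 + ga l * x m \<noteq> 0 \<Longrightarrow> z = x m / (1 + ga l * x m) \<Longrightarrow>
            fst (X (Suc m)) \<noteq> 0 \<and> x (Suc m) = z"
        proof -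
          fix z assume ne: "1 + ga l * x m \<noteq> 0" and z: "z = x m / (1 + ga l * x m)"
          show "fst (X (Suc m)) \<noteq> 0 \<and> x (Suc m) = z"
            using ratio_T[OF T, of "ga l" "snd (X m)"] ne XS z by (simp add: x_def)
        qed
        { assume "E (x m)"
          then have "1 + ga l * x m \<noteq> 0 \<and> 0 < x m / (1 + ga l * x m) \<and> x m / (1 + ga l * x m) \<le> x m"
            using tE_T ga by (simp add: E_def)
          then have ?thesis using key[OF _ refl] \<open>E (x m)\<close> by (auto simp: E_def) }
        moreover
        { fix j assume j: "2 * j + 2 \<le> m" "x m \<le> h (2 * j + 1)"
          have jK: "2 * j + 2 \<le> 2 * K" using j mn len by simp
          have hn: "h (2 * j + 1) < 0" using hsg[of "2 * j"] jK by simp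
          have hp: "h (2 * j + 2) > 0" using hsg[of "2 * j + 1"] jK by simp
          have he: "h (2 * j + 2) = h (2 * j + 1) / (1 + ga l * h (2 * j + 1))" using heven[OF jK] .
          have tt: "1 + ga l * x m \<noteq> 0 \<and> 0 < x m / (1 + ga l * x m) \<and> x m / (1 + ga l * x m) \<le> h (2 * j + 2)"
            using tU_T[OF j(2) hn ga] hp he by simp
          have "C (Suc m) (x (Suc m))" unfolding C_def using tt key[OF _ refl] j
            by (intro exI[of _ j]) simp
          then have ?thesis using tt key[OF _ refl] by simp }
        moreover
        { fix j assume j: "2 * j + 3 \<le> m" "0 < x m" "x m \<le> h (2 * j + 2)"
          have tt: "1 + ga l * x m \<noteq> 0 \<and> 0 < x m / (1 + ga l * x m) \<and> x m / (1 + ga l * x m) \<le> x m"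
            using tE_T[OF j(2) ga] .
          have "C (Suc m) (x (Suc m))" unfolding C_def using tt key[OF _ refl] j
            by (intro exI[of _ j]) auto
          then have ?thesis using tt key[OF _ refl] by simp }
        ultimately show ?thesis using ty0 unfolding U_def C_def by blast
      qed
    qed
  qed
  have "fst (X ?n) \<noteq> 0" using inv[of ?n] by simp
  then show ?thesis using len by (simp add: X_def)
qed

lemma tP_T:
  assumes H: "0 < (H::real)" and Hy: "H \<le> y" and g: "g < 0" and kb: "kb \<le> g" and dH: "1 + g * H < 0"
  shows "1 + kb * y < 0 \<and> y / (1 + kb * y) < 0 \<and> H / (1 + g * H) \<le> y / (1 + kb * y)"
proof -
  have y: "0 < y" using H Hy by simp
  have "g * y \<le> g * H" using mult_left_mono_neg[OF Hy] g by simp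
  then have dy: "1 + g * y < 0" using dH by linarith
  have "kb * y \<le> g * y" using mult_right_mono[OF kb] y by simp
  then have dk: "1 + kb * y < 0" using dy by linarith
  have "y / (1 + kb * y) < 0" using dk y by (simp add: divide_pos_neg)
  moreover have "y / (1 + g * y) \<le> y / (1 + kb * y)" by (rule mono_k[OF y kb dy])
  moreover have "H / (1 + g * H) \<le> y / (1 + g * y)"
    using dH dy Hy by (intro mono_T) (simp_all add: mult_neg_neg)
  ultimately show ?thesis using dk by simp
qed

lemma auto_pos:
  assumes K: "K \<ge> 1" and k: "k \<ge> 1" and st: "\<forall>i<k. 1 \<le> s ! i \<and> 1 \<le> t ! i"
    and d: "2 * k + d \<le> 2 * K" "even d"
    and l: "0 < l" and c: "Cross 1 l (hsA K)"
    and base: "1 + real (s ! 0) * al l \<ge> xr l (hsA K) (1 + d)"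
  shows "fst (traj l (blocks s t k)) \<noteq> 0"
proof -
  define h where "h = xr l (hsA K)"
  define rs where "rs = runsB s t k"
  have shA: "shape (hsA K)" by (rule shape_hsA[OF K])
  have sh: "shape rs" unfolding rs_def by (rule shape_runsB[OF k st])
  have lrs: "length rs = 2 * k" by (simp add: rs_def)
  have al: "0 < al l" using l by (simp add: al_def)
  have ga: "ga l < 0" using l by (simp add: ga_def field_simps)
  have hodd: "h (2 * j + 1) = h (2 * j) + al l" if "1 \<le> j" "2 * j + 1 \<le> 2 * K" for j
    unfolding h_def by (rule hA_odd[OF K c that])
  have heven: "h (2 * j + 2) = h (2 * j + 1) / (1 + ga l * h (2 * j + 1))" if "2 * j + 2 \<le> 2 * K" for j
    using hA_even[OF K c that] by (simp add: h_def)
  have hsg: "(odd i \<longrightarrow> h (Suc i) < 0) \<and> (even i \<longrightarrow> h (Suc i) > 0)" if "i < 2 * K" for i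
    using cross_sign_pos[OF shA c] that by (simp add: h_def)
  define y where "y i = xr l rs i" for i
  define TT where "TT i = fst (rstate l rs i)" for i
  have inv: "TT i \<noteq> 0 \<and> (odd i \<longrightarrow> y i \<ge> h (i + d)) \<and> (even i \<longrightarrow> h (i + d) \<le> y i \<and> y i < 0)"
    if "1 \<le> i" "i \<le> 2 * k" for i
    using that
  proof (induction i)
    case 0 then show ?case by simp
  next
    case (Suc i)
    show ?case
    proof (cases "i = 0")
      case True
      have r0: "rs ! 0 = (False, s ! 0)" using k by (simp add: rs_def runsB_nth)
      have "rstate l rs 1 = (1, 1 + real (s ! 0) * al l)"
        using rstate_Suc_shape[OF sh, of 0 l] k r0 lrs by simp
      then show ?thesis using True base by (simp add: y_def TT_def xr_def h_def)
    next
      case False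
      then have i1: "1 \<le> i" and ik: "i < length rs" using Suc.prems lrs by auto
      from Suc.IH i1 ik lrs have T: "TT i \<noteq> 0"
        and IH: "(odd i \<longrightarrow> y i \<ge> h (i + d)) \<and> (even i \<longrightarrow> h (i + d) \<le> y i \<and> y i < 0)" by auto
      define m where "m = snd (rs ! i)"
      have m1: "real m \<ge> 1" using shapeD(2)[OF sh ik] by (simp add: m_def)
      show ?thesis
      proof (cases "odd i")
        case True
        have RS: "rstate l rs (Suc i) = (TT i + (real m * ga l) * snd (rstate l rs i), snd (rstate l rs i))"
          using rstate_Suc_shape[OF sh ik, of l] True by (simp add: m_def TT_def)
        have "odd (i + d)" using True d(2) by simp
        then obtain j where j: "i + d = 2 * j + 1" by (rule oddE)
        have jK: "2 * j + 2 \<le> 2 * K" using j ik lrs d(1) by simp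
        have Hp: "h (2 * j + 1) > 0" using hsg[of "2 * j"] jK by simp
        have Hn: "h (2 * j + 2) < 0" using hsg[of "2 * j + 1"] jK by simp
        have he: "h (2 * j + 2) = h (2 * j + 1) / (1 + ga l * h (2 * j + 1))" by (rule heven[OF jK])
        have dH: "1 + ga l * h (2 * j + 1) < 0" using Hp Hn he by (simp add: divide_less_0_iff)
        have yH: "h (2 * j + 1) \<le> y i" using IH True j by simp
        have kb: "real m * ga l \<le> ga l" using mult_right_mono_neg[OF m1, of "ga l"] ga by simp
        note tt = tP_T[OF Hp yH ga kb dH]
        have ne: "1 + real m * ga l * (snd (rstate l rs i) / TT i) \<noteq> 0"
          using tt by (simp add: y_def xr_def TT_def)
        have r: "TT (Suc i) \<noteq> 0 \<and> y (Suc i) = y i / (1 + real m * ga l * y i)"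
          using ratio_T[OF T ne] RS by (simp add: y_def xr_def TT_def)
        have "h (Suc i + d) = h (2 * j + 2)" using j by simp
        then show ?thesis using r tt True he by simp
      next
        case False
        have RS: "rstate l rs (Suc i) = (TT i, snd (rstate l rs i) + (real m * al l) * TT i)"
          using rstate_Suc_shape[OF sh ik, of l] False by (simp add: m_def TT_def)
        have "even (i + d)" using False d(2) by simp
        then obtain j where j: "i + d = 2 * j" by (rule evenE)
        have j1: "1 \<le> j" using j i1 by simp
        have jK: "2 * j + 1 \<le> 2 * K" using j ik lrs d(1) by simp
        have ho: "h (2 * j + 1) = h (2 * j) + al l" by (rule hodd[OF j1 jK])
        have yH: "h (2 * j) \<le> y i" using IH False j by simp
        have ka: "real m * al l \<ge> al l" using mult_right_mono[OF m1, of "al l"] al by simp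
        have r: "TT (Suc i) \<noteq> 0 \<and> y (Suc i) = y i + real m * al l"
          using ratio_F[OF T] RS T by (simp add: y_def xr_def TT_def)
        have "h (Suc i + d) = h (2 * j + 1)" using j by simp
        then show ?thesis using r ho yH ka False by simp
      qed
    qed
  qed
  have "TT (2 * k) \<noteq> 0" using inv[of "2 * k"] k by simp
  then show ?thesis by (simp add: TT_def traj_B rs_def)
qed

lemma not_cross_big:
  assumes sh: "shape rs" and len: "2 \<le> length rs" and r0: "rs ! 0 = (False, s0)" and r1: "rs ! 1 = (True, t0)"
    and s0: "s0 \<ge> 1" and t0: "t0 \<ge> 1"
  shows "\<not> Cross 1 (real t0 * (1 + real s0)) rs"
proof
  define L where "L = real t0 * (1 + real s0)"
  assume c: "Cross 1 (real t0 * (1 + real s0)) rs"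
  then have c': "Cross 1 L rs" by (simp add: L_def)
  have L: "L \<ge> 2" unfolding L_def using s0 t0
  proof -
    have "real t0 \<ge> 1" "1 + real s0 \<ge> 2" using s0 t0 by auto
    then show "real t0 * (1 + real s0) \<ge> 2" using mult_mono[of 1 "real t0" 2 "1 + real s0"] by simp
  qed
  define p where "p = 1 + real s0 * al L"
  have i0: "0 < length rs" "1 < length rs" using len by auto
  have r1s: "rstate L rs 1 = (1, p)" using rstate_Suc_shape[OF sh i0(1), of L] r0 by (simp add: p_def)
  have r2s: "rstate L rs 2 = (1 + real t0 * ga L * p, p)"
    using rstate_Suc_shape[OF sh i0(2), of L] r1 r1s by (simp add: numeral_2_eq_2)
  have "real s0 / L \<ge> 0" using L by simp
  then have pp: "p > 0" by (simp add: p_def al_def)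
  have "real t0 * p = real t0 + real s0 / (1 + real s0)"
  proof -
    have "real t0 * (real s0 * (1 / L)) = real s0 / (1 + real s0)"
    proof -
      have a: "real t0 \<noteq> 0" "1 + real s0 \<noteq> 0" using t0 by auto
      have "real t0 * (real s0 * (1 / L)) = real s0 * (real t0 / (real t0 * (1 + real s0)))"
        by (simp add: L_def)
      also have "real t0 / (real t0 * (1 + real s0)) = 1 / (1 + real s0)" using a by simp
      finally show ?thesis by simp
    qed
    then show ?thesis by (simp add: p_def al_def distrib_left)
  qed
  moreover have "real s0 / (1 + real s0) \<le> 1" by simp
  moreover have "real t0 \<le> L" unfolding L_def
    using mult_left_mono[of 1 "1 + real s0" "real t0"] by simp
  ultimately have tp: "real t0 * p \<le> L + 1" by linarith
  have q: "1 + real t0 * ga L * p \<ge> 0"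
  proof -
    have "real t0 * p / (L + 1) \<le> 1" using tp L by simp
    moreover have "real t0 * ga L * p = - (real t0 * p / (L + 1))" by (simp add: ga_def)
    ultimately show ?thesis by linarith
  qed
  have "prodr L rs 2 \<ge> 0" using q pp by (simp add: prodr_def r2s)
  moreover have "sg 1 (fst (rs ! 1)) * prodr L rs (Suc 1) > 0" using c' len by (simp add: Cross_def)
  ultimately show False using r1 by (simp add: sg_def numeral_2_eq_2)
qed

theorem theorem4p3:
  fixes n :: nat
  assumes "odd n" and "n \<ge> 3"
  shows "(\<forall>b. threshold_string n b \<and> (\<exists>x. eigenvalue (adj_matrix b) x \<and> x < -1) \<longrightarrow>
            mu_minus (adj_matrix b) \<le> mu_minus (adj_matrix (anti_regular_string n)))
       \<and> (\<forall>b s t. threshold_string n b \<and> block_form b s t \<and> s ! 0 \<ge> 2 \<longrightarrow>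
            mu_plus (adj_matrix (anti_regular_string n)) \<le> mu_plus (adj_matrix b))
       \<and> (\<forall>b s t. threshold_string n b \<and> block_form b s t \<and> s ! 0 = 1 \<and> 2 * length s + 1 < n \<longrightarrow>
            mu_plus (adj_matrix (anti_regular_string n)) \<le> mu_plus (adj_matrix b))"
proof -
  define K where "K = n div 2"
  have nK: "n = 2 * K + 1" using assms(1) by (simp add: K_def)
  have K1: "K \<ge> 1" using assms(2) nK by simp
  define A where "A = anti_regular_string n"
  have lenA: "length A = n" using assms(1) nK by (simp add: A_def anti_regular_string_def length_concat sum_list_replicate)
  have A0: "A ! 0 = False" using assms(1) by (simp add: A_def anti_regular_string_def)
  have Ane: "A \<noteq> []" using lenA assms(2) by auto
  have shA: "shape (hsA K)" by (rule shape_hsA[OF K1])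
  have eigA: "eigenvalue (adj_matrix A) l \<longleftrightarrow> fst (rstate l (hsA K) (length (hsA K))) = 0"
    if "l \<noteq> 0" "l \<noteq> -1" for l
    using eig_iff_traj[OF that A0 Ane] traj_A[OF assms, of l] by (simp add: A_def K_def)
  have hA0: "snd (hsA K ! 0) \<ge> 2" using hsA_nth[of 0 K] K1 by simp
  have P1: "mu_minus (adj_matrix b) \<le> mu_minus (adj_matrix A)"
    if ts: "threshold_string n b" and ex: "\<exists>x. eigenvalue (adj_matrix b) x \<and> x < -1" for b
  proof -
    define Sb where "Sb = {x. eigenvalue (adj_matrix b) x \<and> x < -1}"
    define SA where "SA = {x. eigenvalue (adj_matrix A) x \<and> x < -1}"
    have fb: "finite Sb" unfolding Sb_def by (rule finite_eig)
    have fA: "finite SA" unfolding SA_def by (rule finite_eig)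
    have neb: "Sb \<noteq> {}" using ex by (auto simp: Sb_def)
    define y where "y = Max Sb"
    have yS: "y \<in> Sb" unfolding y_def using fb neb by (rule Max_in)
    then have y1: "y < -1" and ey: "eigenvalue (adj_matrix b) y" by (auto simp: Sb_def)
    have lb: "length b = n" and b0: "b ! 0 = False" using ts by (auto simp: threshold_string_def)
    have bne: "b \<noteq> []" using lb assms(2) by auto
    have tb: "fst (traj y b) = 0" using eig_iff_traj[of y b] y1 b0 bne ey by simp
    have nc: "\<not> Cross (-1) y (hsA K)"
    proof
      assume "Cross (-1) y (hsA K)"
      then have "fst (traj y b) \<noteq> 0" using auto_i[OF K1 _ b0 y1] lb nK by simp
      then show False using tb by simp
    qed
    obtain l0 where l0: "y \<le> l0" "l0 < -1" "fst (rstate l0 (hsA K) (length (hsA K))) = 0"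
      using exists_neg[OF shA hA0 y1 nc] by blast
    have "eigenvalue (adj_matrix A) l0" using eigA[of l0] l0 by simp
    then have "l0 \<in> SA" using l0 by (simp add: SA_def)
    then have "l0 \<le> Max SA" using fA by simp
    then show ?thesis using l0 by (simp add: mu_minus_def y_def Sb_def SA_def)
  qed
  have P23: "mu_plus (adj_matrix A) \<le> mu_plus (adj_matrix b)"
    if ts: "threshold_string n b" and bf: "block_form b s t"
      and cs: "(s ! 0 \<ge> 2 \<and> (d::nat) = 0) \<or> (s ! 0 = 1 \<and> 2 * length s + 1 < n \<and> d = 2)" for b s t d
  proof -
    define k where "k = length s"
    have k1: "k \<ge> 1" and st: "\<forall>i<k. 1 \<le> s ! i \<and> 1 \<le> t ! i" and lt: "length t = k"
      and bb: "b = blocks s t k"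
      using bf by (auto simp: block_form_def k_def blocks_def)
    have lb: "length b = n" and b0: "b ! 0 = False" using ts by (auto simp: threshold_string_def)
    have bne: "b \<noteq> []" using lb assms(2) by auto
    have sumk: "(\<Sum>i<k. s ! i + t ! i) \<ge> 2 * k + (s ! 0 - 1)"
      using st k1
    proof (induction k)
      case 0 then show ?case by simp
    next
      case (Suc k)
      show ?case
      proof (cases "k = 0")
        case True then show ?thesis using Suc.prems by simp
      next
        case False
        then have "(\<Sum>i<k. s ! i + t ! i) \<ge> 2 * k + (s ! 0 - 1)" using Suc by simp
        moreover have "s ! k + t ! k \<ge> 2" using Suc.prems(1) by (metis add_mono lessI one_add_one)
        ultimately show ?thesis by simp
      qed
    qed
    have nsum: "n = (\<Sum>i<k. s ! i + t ! i)" using lb bb length_blocks by simp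
    have dK: "2 * k + d \<le> 2 * K"
    proof (cases "d = 0")
      case True
      then have "s ! 0 \<ge> 2" using cs by auto
      then have "n \<ge> 2 * k + 1" using sumk nsum by simp
      then show ?thesis using True nK by simp
    next
      case False
      then have "2 * k + 1 < n" "d = 2" using cs k_def by auto
      then show ?thesis using nK by simp
    qed
    have eigb: "eigenvalue (adj_matrix b) l \<longleftrightarrow> fst (rstate l (runsB s t k) (length (runsB s t k))) = 0"
      if "l \<noteq> 0" "l \<noteq> -1" for l
      using eig_iff_traj[OF that b0 bne] traj_B[of l s t k] bb by simp
    have shB: "shape (runsB s t k)" by (rule shape_runsB[OF k1 st])
    have r0: "runsB s t k ! 0 = (False, s ! 0)" using k1 by (simp add: runsB_nth)
    have r1: "runsB s t k ! 1 = (True, t ! 0)" using k1 by (simp add: runsB_nth)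
    have s0: "s ! 0 \<ge> 1" "t ! 0 \<ge> 1" using st k1 by auto
    have L1: "real (t ! 0) * (1 + real (s ! 0)) > 0" using s0 by simp
    obtain l1 where l1: "0 < l1" "fst (rstate l1 (runsB s t k) (length (runsB s t k))) = 0"
      using exists_pos[OF shB L1 not_cross_big[OF shB _ r0 r1 s0]] k1 by auto
    define Sb where "Sb = {x. eigenvalue (adj_matrix b) x \<and> x > 0}"
    define SA where "SA = {x. eigenvalue (adj_matrix A) x \<and> x > 0}"
    have fb: "finite Sb" unfolding Sb_def by (rule finite_eig)
    have fA: "finite SA" unfolding SA_def by (rule finite_eig)
    have "l1 \<in> Sb" using eigb[of l1] l1 by (simp add: Sb_def)
    then have neb: "Sb \<noteq> {}" by auto
    define y where "y = Min Sb"
    have yS: "y \<in> Sb" unfolding y_def using fb neb by (rule Min_in)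
    then have y0: "y > 0" and ey: "eigenvalue (adj_matrix b) y" by (auto simp: Sb_def)
    have tb: "fst (traj y b) = 0" using eig_iff_traj[of y b] y0 b0 bne ey by simp
    have nc: "\<not> Cross 1 y (hsA K)"
    proof
      assume c: "Cross 1 y (hsA K)"
      have base: "1 + real (s ! 0) * al y \<ge> xr y (hsA K) (1 + d)"
      proof (cases "d = 0")
        case True
        then have s2: "real (s ! 0) \<ge> 2" using cs by auto
        have al: "al y > 0" using y0 by (simp add: al_def)
        have "real (s ! 0) * al y \<ge> 2 * al y" using mult_right_mono[OF s2] al by simp
        then show ?thesis using hA_1[OF K1 c] True by simp
      next
        case False
        then have s1: "s ! 0 = 1" and d2: "d = 2" using cs by auto
        have K2: "2 * 1 + 1 \<le> 2 * K" using dK k1 d2 by simp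
        have h3: "xr y (hsA K) 3 = xr y (hsA K) 2 + al y" using hA_odd[OF K1 c _ K2] by simp
        have h2: "xr y (hsA K) 2 < 0" using cross_sign_pos[OF shA c, of 1] K2 by (simp add: numeral_2_eq_2)
        have "1 + d = 3" using d2 by simp
        have "1 + real (s ! 0) * al y \<ge> xr y (hsA K) 3" using h3 h2 s1 by simp
        then show ?thesis by (simp only: \<open>1 + d = 3\<close>)
      qed
      have "even d" using cs by auto
      then have "fst (traj y b) \<noteq> 0" using auto_pos[OF K1 k1 st dK _ y0 c base] bb by simp
      then show False using tb by simp
    qed
    obtain l0 where l0: "0 < l0" "l0 \<le> y" "fst (rstate l0 (hsA K) (length (hsA K))) = 0"
      using exists_pos[OF shA y0 nc] by blast
    have "eigenvalue (adj_matrix A) l0" using eigA[of l0] l0 by simp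
    then have "l0 \<in> SA" using l0 by (simp add: SA_def)
    then have "Min SA \<le> l0" using fA by simp
    then show ?thesis using l0 by (simp add: mu_plus_def y_def Sb_def SA_def)
  qed
  show ?thesis
  proof (intro conjI allI impI)
    fix b assume "threshold_string n b \<and> (\<exists>x. eigenvalue (adj_matrix b) x \<and> x < - 1)"
    then show "mu_minus (adj_matrix b) \<le> mu_minus (adj_matrix (anti_regular_string n))"
      using P1 by (simp add: A_def)
  next
    fix b s t assume "threshold_string n b \<and> block_form b s t \<and> 2 \<le> s ! 0"
    then show "mu_plus (adj_matrix (anti_regular_string n)) \<le> mu_plus (adj_matrix b)"
      using P23[of b s t 0] by (simp add: A_def)
  next
    fix b s t assume "threshold_string n b \<and> block_form b s t \<and> s ! 0 = 1 \<and> 2 * length s + 1 < n"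
    then show "mu_plus (adj_matrix (anti_regular_string n)) \<le> mu_plus (adj_matrix b)"
      using P23[of b s t 2] by (simp add: A_def)
  qed
qed

end
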